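(* Let $R>0$ and $s\in\{-R,\,iR\}$. Then the Voiculescu transform of $a^{1/2}_s$ is $\phi_{a^{1/2}_s}(z)=2isz^{1/2}-s^2$; consequently $a^{1/2}_{-R}$ and $a^{1/2}_{iR}$ are freely $\tfrac12$-stable but not strictly freely stable.
   Context: For $w\in\mathbb{C}\setminus[0,\infty)$ and $p\in\{\alpha,1/\alpha\}$, $w^p:=e^{p\log_{(1)}w}$ with $\operatorname{Im}\log_{(1)}w\in(0,2\pi)$; $(-1)^{\alpha-1}:=e^{i(\alpha-1)\pi}$. For $0<\alpha\le1$ and $(1-\alpha)\pi\le\arg s\le\pi$, the monotone $\alpha$-stable law $a^\alpha_s$ is the probability measure on $\mathbb{R}$ with reciprocal Cauchy transform $F_{a^\alpha_s}(z)=1/\int\frac{a^\alpha_s(dx)}{z-x}=(z^\alpha+(-1)^{\alpha-1}s)^{1/\alpha}$ on $\mathbb{C}_+$ (so $F_{a^{1/2}_s}(z)=(z^{1/2}-is)^2$). For a probability measure $\mu$, $F_\mu=1/G_\mu$ is univalent on a truncated cone $\Gamma_{\eta,M}=\{\operatorname{Im}z>M,\ \operatorname{Im}z>\eta|\operatorname{Re}z|\}$ whose image contains another such cone; the Voiculescu transform is $\phi_\mu(z)=F_\mu^{-1}(z)-z$ on that cone. A probability measure is freely $\tfrac12$-stable iff $\phi_\mu(z)=bz^{1/2}+c$ with $c\in\mathbb{R}$ and $\arg b\in[\pi,3\pi/2]$, and strictly freely $\tfrac12$-stable iff moreover $c=0$. *)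

theory Defs
  imports "HOL-Probability.Probability"
begin

text \<open>Branch of the logarithm with imaginary part in (0, 2 pi), on C minus [0,inf).
  For w not in [0,inf), -w is not in (-inf,0], so Im (Ln (-w)) lies in (-pi,pi).\<close>
definition log1 :: "complex \<Rightarrow> complex" where
  "log1 w = Ln (- w) + \<i> * of_real pi"

definition cpow1 :: "real \<Rightarrow> complex \<Rightarrow> complex" where
  "cpow1 p w = exp (of_real p * log1 w)"

definition cauchy_transform :: "real measure \<Rightarrow> complex \<Rightarrow> complex" where
  "cauchy_transform \<mu> z = (\<integral>x. 1 / (z - of_real x) \<partial>\<mu>)"

definition recip_cauchy :: "real measure \<Rightarrow> complex \<Rightarrow> complex" where
  "recip_cauchy \<mu> z = 1 / cauchy_transform \<mu> z"

definition real_prob :: "real measure \<Rightarrow> bool" where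
  "real_prob \<mu> \<longleftrightarrow> prob_space \<mu> \<and> sets \<mu> = sets borel"

text \<open>The monotone alpha-stable law a^alpha_s: the probability measure whose reciprocal
  Cauchy transform is (z^alpha + (-1)^(alpha-1) s)^(1/alpha) on the upper half-plane.\<close>
definition monotone_stable_law :: "real \<Rightarrow> complex \<Rightarrow> real measure \<Rightarrow> bool" where
  "monotone_stable_law \<alpha> s \<mu> \<longleftrightarrow> real_prob \<mu> \<and>
     (\<forall>z. Im z > 0 \<longrightarrow> recip_cauchy \<mu> z =
        cpow1 (1 / \<alpha>) (cpow1 \<alpha> z + exp (\<i> * of_real ((\<alpha> - 1) * pi)) * s))"

definition tcone :: "real \<Rightarrow> real \<Rightarrow> complex set" where
  "tcone \<eta> M = {z. Im z > M \<and> Im z > \<eta> * \<bar>Re z\<bar>}"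

definition voiculescu_eq :: "real measure \<Rightarrow> (complex \<Rightarrow> complex) \<Rightarrow> bool" where
  "voiculescu_eq \<mu> g \<longleftrightarrow>
     (\<exists>\<eta> M \<eta>' M'. \<eta> > 0 \<and> M > 0 \<and> \<eta>' > 0 \<and> M' > 0 \<and>
        inj_on (recip_cauchy \<mu>) (tcone \<eta> M) \<and>
        tcone \<eta>' M' \<subseteq> recip_cauchy \<mu> ` tcone \<eta> M \<and>
        (\<forall>z\<in>tcone \<eta>' M'. inv_into (tcone \<eta> M) (recip_cauchy \<mu>) z - z = g z))"

definition arg_in_third :: "complex \<Rightarrow> bool" where
  "arg_in_third b \<longleftrightarrow> b \<noteq> 0 \<and>
     (\<exists>\<theta>. pi \<le> \<theta> \<and> \<theta> \<le> 3 * pi / 2 \<and> b = of_real (cmod b) * exp (\<i> * of_real \<theta>))"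

definition freely_half_stable :: "real measure \<Rightarrow> bool" where
  "freely_half_stable \<mu> \<longleftrightarrow> real_prob \<mu> \<and>
     (\<exists>b c. c \<in> \<real> \<and> arg_in_third b \<and> voiculescu_eq \<mu> (\<lambda>z. b * cpow1 (1/2) z + c))"

definition strictly_freely_half_stable :: "real measure \<Rightarrow> bool" where
  "strictly_freely_half_stable \<mu> \<longleftrightarrow> real_prob \<mu> \<and>
     (\<exists>b. arg_in_third b \<and> voiculescu_eq \<mu> (\<lambda>z. b * cpow1 (1/2) z))"

end

theory Submission
  imports Defs
begin


lemma sq_props:
  assumes "Im w > 0"
  shows "(cpow1 (1/2) w)^2 = w \<and> Re (cpow1 (1/2) w) > 0 \<and> Im (cpow1 (1/2) w) > 0"
proof -
  have w0: "- w \<noteq> 0" using assms by auto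
  have e: "exp (log1 w) = w" unfolding log1_def using w0
    by (simp add: exp_add)
  have sq: "(cpow1 (1/2) w)^2 = w"
  proof -
    have "(cpow1 (1/2) w)^2 = exp (of_real (1/2) * log1 w + of_real (1/2) * log1 w)"
      unfolding cpow1_def by (simp only: power2_eq_square exp_add)
    also have "of_real (1/2) * log1 w + of_real (1/2) * log1 w = log1 w" by simp
    finally show ?thesis using e by simp
  qed
  have "\<not> (0 \<le> Im (-w))" using assms by simp
  hence "Im (Ln (-w)) < 0" using Im_Ln_pos_le[OF w0] Im_Ln_le_pi[OF w0] by linarith
  moreover have "- pi < Im (Ln (-w))" using mpi_less_Im_Ln[OF w0] .
  ultimately have th: "0 < Im (log1 w) / 2" "Im (log1 w) / 2 < pi/2"
    unfolding log1_def by auto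
  have im: "Im (of_real (1/2) * log1 w) = Im (log1 w) / 2" by simp
  have "cos (Im (log1 w) / 2) > 0" using th by (intro cos_gt_zero_pi) auto
  moreover have "sin (Im (log1 w) / 2) > 0" using th by (intro sin_gt_zero) auto
  ultimately have "Re (cpow1 (1/2) w) > 0 \<and> Im (cpow1 (1/2) w) > 0"
    unfolding cpow1_def Re_exp Im_exp im by simp
  with sq show ?thesis by blast
qed

lemma sq_unique:
  assumes "Re v > 0" "Im v > 0"
  shows "cpow1 (1/2) (v^2) = v"
proof -
  have "Im (v^2) > 0" using assms by (simp add: power2_eq_square)
  then have u: "(cpow1 (1/2) (v^2))^2 = v^2" "Re (cpow1 (1/2) (v^2)) > 0"
    using sq_props by blast+
  define u where "u = cpow1 (1/2) (v^2)"
  have "(u - v) * (u + v) = 0" using u unfolding u_def[symmetric]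
    by (simp add: power2_eq_square algebra_simps)
  moreover have "u + v \<noteq> 0" using u(2) assms unfolding u_def[symmetric]
    by (metis add_pos_pos plus_complex.sel(1) zero_complex.sel(1) less_irrefl)
  ultimately have "u - v = 0" by (simp only: mult_eq_0_iff) blast
  hence "u = v" by (simp only: right_minus_eq)
  thus ?thesis unfolding u_def .
qed

lemma cpow2: assumes "w \<noteq> 0" shows "cpow1 2 w = w^2"
proof -
  have e: "exp (log1 w) = w" unfolding log1_def using assms
    by (simp add: exp_add)
  have t: "complex_of_real 2 * log1 w = log1 w + log1 w" by (simp only: of_real_numeral mult_2)
  have "cpow1 2 w = exp (log1 w + log1 w)" unfolding cpow1_def by (simp only: t)
  also have "\<dots> = w^2" by (simp only: exp_add e power2_eq_square)
  finally show ?thesis .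
qed


lemma arithA:
  fixes a b R :: real
  assumes a: "a > 0" and b: "b > 0" and R: "R > 0" and h1: "2*a*b > \<bar>a^2 - b^2\<bar>" and h2: "2*a*b > 200*R^2"
  shows "b > R \<and> 2*a*(b-R) > R^2 \<and> 2*a*(b-R) > 1/2 * \<bar>a^2 - (b-R)^2\<bar>"
proof -
  have h2': "100*R^2 < a*b" using h2 by simp
  have a3: "a < 3*b"
  proof (rule ccontr)
    assume "\<not> a < 3*b"
    hence "a - 2*b \<ge> b" by simp
    hence "a*(a-2*b) \<ge> a*b" using a by (intro mult_left_mono) auto
    moreover have "a*b \<ge> 3*b*b" using \<open>\<not> a < 3*b\<close> b by (intro mult_right_mono) auto
    ultimately have "a^2 - b^2 - 2*a*b \<ge> 2*b*b" by (simp add: power2_eq_square algebra_simps)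
    thus False using h1 b by (smt (verit) mult_pos_pos)
  qed
  have b3: "b < 3*a"
  proof (rule ccontr)
    assume "\<not> b < 3*a"
    hence "b - 2*a \<ge> a" by simp
    hence "b*(b-2*a) \<ge> b*a" using b by (intro mult_left_mono) auto
    moreover have "b*a \<ge> 3*a*a" using \<open>\<not> b < 3*a\<close> a by (intro mult_right_mono) auto
    ultimately have "b^2 - a^2 - 2*a*b \<ge> 2*a*a" by (simp add: power2_eq_square algebra_simps)
    thus False using h1 a by (smt (verit) mult_pos_pos)
  qed
  have "a*b < 3*(b*b)" using a3 b by simp
  hence bb: "b*b > 33*R^2" using h2' zero_le_power2[of R] by linarith
  have b5: "b > 5*R"
  proof (rule ccontr)
    assume "\<not> b > 5*R"
    hence "b*b \<le> (5*R)*(5*R)" using b by (intro mult_mono) auto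
    thus False using bb R by (simp add: power2_eq_square) (smt (verit) mult_pos_pos)
  qed
  have "a*b < 3*(a*a)" using b3 a by (simp add: mult.commute)
  hence aa: "a*a > 33*R^2" using h2' zero_le_power2[of R] by linarith
  have a5: "a > 5*R"
  proof (rule ccontr)
    assume "\<not> a > 5*R"
    hence "a*a \<le> (5*R)*(5*R)" using a by (intro mult_mono) auto
    thus False using aa R by (simp add: power2_eq_square) (smt (verit) mult_pos_pos)
  qed
  have aR: "a*R < a*b/5" using b5 a by simp
  have bR: "b*R < a*b/5" using a5 b by (simp add: mult.commute)
  have RR: "R*R < a*b/25"
  proof -
    have "R*R < (a/5)*(b/5)" using a5 b5 R by (intro mult_strict_mono) auto
    thus ?thesis by simp
  qed
  have eq: "a^2 - (b-R)^2 = (a^2 - b^2) + 2*b*R - R*R" by (simp add: power2_eq_square algebra_simps)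
  have "\<bar>a^2 - (b-R)^2\<bar> \<le> \<bar>a^2 - b^2\<bar> + 2*b*R + R*R" unfolding eq using R b by (smt (verit) mult_pos_pos)
  hence X61: "\<bar>a^2 - (b-R)^2\<bar> < 61/25*(a*b)" using h1 bR RR by (simp add: mult.assoc)
  have lin: "\<And>X P Q::real. 0 \<le> X \<Longrightarrow> X < 61/25*P \<Longrightarrow> Q < P/5 \<Longrightarrow> 1/2*X < 2*P - 2*Q" by linarith
  moreover have e2: "2*a*(b-R) = 2*(a*b) - 2*(a*R)" by (simp add: algebra_simps)
  moreover have "2*a*b = 2*(a*b)" by simp
  ultimately have "2*a*(b-R) > 1/2 * \<bar>a^2 - (b-R)^2\<bar>"
    using aR X61 lin[of "\<bar>a^2 - (b-R)^2\<bar>" "a*b" "a*R"] by simp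
  moreover have "2*a*(b-R) > R^2" 
  proof -
    have lin2: "\<And>Q P S::real. 0 \<le> S \<Longrightarrow> 25*S < P \<Longrightarrow> 5*Q < P \<Longrightarrow> S < 2*P - 2*Q" by linarith
    show ?thesis unfolding e2 power2_eq_square
      by (rule lin2) (use aR RR in auto)
  qed
  ultimately show ?thesis using b5 R by simp
qed

lemma voic_unique:
  assumes v1: "voiculescu_eq \<mu> g1" and v2: "voiculescu_eq \<mu> g2"
    and inj: "\<And>z1 z2. Im z1 > 0 \<Longrightarrow> Im z2 > 0 \<Longrightarrow> recip_cauchy \<mu> z1 = recip_cauchy \<mu> z2 \<Longrightarrow> z1 = z2"
  shows "\<exists>M>0. \<forall>t>M. g1 (\<i> * of_real t) = g2 (\<i> * of_real t)"
proof -
  obtain e1 M1 e1' M1' where h1: "e1 > 0" "M1 > 0" "e1' > 0" "M1' > 0"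
    "tcone e1' M1' \<subseteq> recip_cauchy \<mu> ` tcone e1 M1"
    "\<forall>z\<in>tcone e1' M1'. inv_into (tcone e1 M1) (recip_cauchy \<mu>) z - z = g1 z"
    using v1 unfolding voiculescu_eq_def by blast
  obtain e2 M2 e2' M2' where h2: "e2 > 0" "M2 > 0" "e2' > 0" "M2' > 0"
    "tcone e2' M2' \<subseteq> recip_cauchy \<mu> ` tcone e2 M2"
    "\<forall>z\<in>tcone e2' M2'. inv_into (tcone e2 M2) (recip_cauchy \<mu>) z - z = g2 z"
    using v2 unfolding voiculescu_eq_def by blast
  have "\<forall>t>M1'+M2'. g1 (\<i> * of_real t) = g2 (\<i> * of_real t)"
  proof (intro allI impI)
    fix t assume t: "t > M1' + M2'"
    define w where "w = \<i> * complex_of_real t"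
    have w1: "w \<in> tcone e1' M1'" using t h1 h2 unfolding w_def tcone_def by auto
    have w2: "w \<in> tcone e2' M2'" using t h1 h2 unfolding w_def tcone_def by auto
    define x1 where "x1 = inv_into (tcone e1 M1) (recip_cauchy \<mu>) w"
    define x2 where "x2 = inv_into (tcone e2 M2) (recip_cauchy \<mu>) w"
    have wi1: "w \<in> recip_cauchy \<mu> ` tcone e1 M1" using w1 h1(5) by blast
    have wi2: "w \<in> recip_cauchy \<mu> ` tcone e2 M2" using w2 h2(5) by blast
    have x1in: "x1 \<in> tcone e1 M1" unfolding x1_def by (rule inv_into_into[OF wi1])
    have x2in: "x2 \<in> tcone e2 M2" unfolding x2_def by (rule inv_into_into[OF wi2])
    have f1: "recip_cauchy \<mu> x1 = w" unfolding x1_def by (rule f_inv_into_f[OF wi1])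
    have f2: "recip_cauchy \<mu> x2 = w" unfolding x2_def by (rule f_inv_into_f[OF wi2])
    have "Im x1 > 0" using x1in h1(2) unfolding tcone_def by auto
    moreover have "Im x2 > 0" using x2in h2(2) unfolding tcone_def by auto
    ultimately have "x1 = x2" using inj f1 f2 by simp
    moreover have "x1 - w = g1 w" using h1(6) w1 unfolding x1_def by blast
    moreover have "x2 - w = g2 w" using h2(6) w2 unfolding x2_def by blast
    ultimately show "g1 (\<i> * of_real t) = g2 (\<i> * of_real t)"
      unfolding w_def by simp
  qed
  moreover have "M1' + M2' > 0" using h1 h2 by simp
  ultimately show ?thesis by blast
qed

theorem mainTheorem5:
  fixes R :: real and s :: complex and \<mu> :: "real measure"
  assumes "R > 0"
    and "s = - of_real R \<or> s = \<i> * of_real R"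
    and "monotone_stable_law (1/2) s \<mu>"
  shows "voiculescu_eq \<mu> (\<lambda>z. 2 * \<i> * s * cpow1 (1/2) z - s ^ 2)
         \<and> freely_half_stable \<mu> \<and> \<not> strictly_freely_half_stable \<mu>"
proof -
  have rp: "real_prob \<mu>" using assms(3) unfolding monotone_stable_law_def by blast
  have ex: "exp (\<i> * of_real ((1/2 - 1) * pi)) = - \<i>"
  proof -
    have h: "(1/2 - 1) * pi = - (pi/2)" by simp
    have "exp (\<i> * of_real ((1/2 - 1) * pi)) = cis (- (pi/2))"
      unfolding h cis_conv_exp by simp
    also have "\<dots> = - \<i>" by (simp add: complex_eq_iff)
    finally show ?thesis .
  qed
  define q where "q = (\<lambda>z. cpow1 (1/2) z - \<i> * s)"
  define F where "F = recip_cauchy \<mu>"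
  have qpos: "Re (q z) > 0 \<and> Im (q z) > 0" if "Im z > 0" for z
    using sq_props[OF that] assms(1,2) unfolding q_def by auto
  have Fq: "F z = (q z)^2" if "Im z > 0" for z
  proof -
    have "F z = cpow1 (1/(1/2)) (cpow1 (1/2) z + exp (\<i> * of_real ((1/2 - 1) * pi)) * s)"
      using assms(3) that unfolding monotone_stable_law_def F_def by blast
    also have "\<dots> = cpow1 2 (q z)" unfolding ex q_def by simp
    also have "\<dots> = (q z)^2" using qpos[OF that] by (intro cpow2) auto
    finally show ?thesis .
  qed
  have inj: "z1 = z2" if "Im z1 > 0" "Im z2 > 0" "F z1 = F z2" for z1 z2
  proof -
    have "q z1 = cpow1 (1/2) ((q z1)^2)" using qpos[OF that(1)] by (simp add: sq_unique)
    also have "\<dots> = cpow1 (1/2) ((q z2)^2)" using Fq that by simp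
    also have "\<dots> = q z2" using qpos[OF that(2)] by (simp add: sq_unique)
    finally have "cpow1 (1/2) z1 = cpow1 (1/2) z2" unfolding q_def by simp
    then show ?thesis using sq_props[OF that(1)] sq_props[OF that(2)] by metis
  qed
  define g where "g = (\<lambda>z. 2 * \<i> * s * cpow1 (1/2) z - s ^ 2)"
  have key: "\<exists>z\<in>tcone (1/2) (R^2). F z = w \<and> z - w = g w" if w: "w \<in> tcone 1 (200*R^2)" for w
  proof -
    have Imw: "Im w > \<bar>Re w\<bar>" "Im w > 200*R^2" using w unfolding tcone_def by auto
    have Iw: "Im w > 0" using Imw by linarith
    define u where "u = cpow1 (1/2) w"
    have u: "u^2 = w" "Re u > 0" "Im u > 0" using sq_props[OF Iw] unfolding u_def by auto
    have Rew: "Re w = (Re u)^2 - (Im u)^2" "Im w = 2*Re u*Im u"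
      using arg_cong[OF u(1), of Re] arg_cong[OF u(1), of Im] by (auto simp: power2_eq_square algebra_simps)
    define v where "v = u + \<i> * s"
    define z where "z = v^2"
    have zw: "z - w = g w"
    proof -
      have "z - w = (u + \<i> * s)^2 - u^2" unfolding z_def v_def using u(1) by simp
      also have "\<dots> = 2 * \<i> * s * u - s^2" by (simp add: power2_eq_square algebra_simps)
      also have "\<dots> = g w" unfolding g_def u_def by simp
      finally show ?thesis .
    qed
    have vz: "Re v > 0 \<and> Im v > 0 \<and> z \<in> tcone (1/2) (R^2)"
      using assms(2)
    proof
      assume s: "s = - of_real R"
      have A: "Im u > R \<and> 2*Re u*(Im u-R) > R^2 \<and> 2*Re u*(Im u-R) > 1/2 * \<bar>(Re u)^2 - (Im u-R)^2\<bar>"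
      proof (rule arithA)
        show "2 * Re u * Im u > \<bar>(Re u)^2 - (Im u)^2\<bar>" using Imw Rew by simp
        show "2 * Re u * Im u > 200 * R^2" using Imw Rew by simp
      qed (use u assms(1) in auto)
      have "Re v = Re u" "Im v = Im u - R" unfolding v_def s by auto
      moreover have "Re z = (Re v)^2 - (Im v)^2" "Im z = 2 * Re v * Im v"
        unfolding z_def by (auto simp: power2_eq_square algebra_simps)
      ultimately show ?thesis using A u unfolding tcone_def by auto
    next
      assume s: "s = \<i> * of_real R"
      have A: "Re u > R \<and> 2*Im u*(Re u-R) > R^2 \<and> 2*Im u*(Re u-R) > 1/2 * \<bar>(Im u)^2 - (Re u-R)^2\<bar>"
      proof (rule arithA)
        have "2 * Im u * Re u = Im w" using Rew by simp
        moreover have "\<bar>(Im u)^2 - (Re u)^2\<bar> = \<bar>Re w\<bar>" using Rew by (simp add: abs_minus_commute)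
        ultimately show "2 * Im u * Re u > \<bar>(Im u)^2 - (Re u)^2\<bar>" "2 * Im u * Re u > 200 * R^2"
          using Imw by simp_all
      qed (use u assms(1) in auto)
      have "Re v = Re u - R" "Im v = Im u" unfolding v_def s by auto
      moreover have "Re z = (Re v)^2 - (Im v)^2" "Im z = 2 * Re v * Im v"
        unfolding z_def by (auto simp: power2_eq_square algebra_simps)
      ultimately show ?thesis using A u unfolding tcone_def by (auto simp: abs_minus_commute mult.commute mult.left_commute)
    qed
    have "cpow1 (1/2) z = v" unfolding z_def using vz by (simp add: sq_unique)
    hence "q z = u" unfolding q_def v_def by simp
    moreover have "Im z > 0" using vz assms(1) unfolding tcone_def by auto
    ultimately have "F z = w" using Fq u(1) by simp
    then show ?thesis using zw vz by blast
  qed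
  have vo: "voiculescu_eq \<mu> g"
    unfolding voiculescu_eq_def
  proof (intro exI conjI)
    show "(1/2::real) > 0" "R^2 > 0" "(1::real) > 0" "200 * R^2 > 0" using assms(1) by auto
    show "inj_on (recip_cauchy \<mu>) (tcone (1/2) (R^2))"
    proof (rule inj_onI)
      fix x y assume "x \<in> tcone (1/2) (R^2)" "y \<in> tcone (1/2) (R^2)" "recip_cauchy \<mu> x = recip_cauchy \<mu> y"
      moreover have "R^2 > 0" using assms(1) by simp
      ultimately show "x = y" using inj unfolding tcone_def F_def
        by (metis (no_types, lifting) mem_Collect_eq order_less_trans)
    qed
    show "tcone 1 (200*R^2) \<subseteq> recip_cauchy \<mu> ` tcone (1/2) (R^2)"
      using key unfolding F_def by blast
    show "\<forall>z\<in>tcone 1 (200*R^2). inv_into (tcone (1/2) (R^2)) (recip_cauchy \<mu>) z - z = g z"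
    proof
      fix w assume w: "w \<in> tcone 1 (200*R^2)"
      obtain z where z: "z \<in> tcone (1/2) (R^2)" "F z = w" "z - w = g w" using key[OF w] by blast
      have "inv_into (tcone (1/2) (R^2)) (recip_cauchy \<mu>) w = z"
      proof (rule inv_into_f_eq)
        show "inj_on (recip_cauchy \<mu>) (tcone (1/2) (R^2))"
        proof (rule inj_onI)
          fix x y assume "x \<in> tcone (1/2) (R^2)" "y \<in> tcone (1/2) (R^2)" "recip_cauchy \<mu> x = recip_cauchy \<mu> y"
          moreover have "R^2 > 0" using assms(1) by simp
          ultimately show "x = y" using inj unfolding tcone_def F_def
            by (metis (no_types, lifting) mem_Collect_eq order_less_trans)
        qed
      qed (use z F_def in auto)
      then show "inv_into (tcone (1/2) (R^2)) (recip_cauchy \<mu>) w - w = g w" using z by simp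
    qed
  qed
  have free: "freely_half_stable \<mu>"
    unfolding freely_half_stable_def
  proof (intro conjI exI)
    show "real_prob \<mu>" by (rule rp)
    show "(- (s^2)) \<in> \<real>" using assms(2) by (auto simp: power2_eq_square algebra_simps)
    show "arg_in_third (2 * \<i> * s)"
      using assms(2)
    proof
      assume s: "s = - of_real R"
      show ?thesis unfolding arg_in_third_def
      proof (intro conjI exI)
        show "2 * \<i> * s \<noteq> 0" using s assms(1) by simp
        show "pi \<le> 3/2*pi" "3/2*pi \<le> 3 * pi / 2" by auto
        have "exp (\<i> * complex_of_real (3/2*pi)) = cis (3/2*pi)"
          unfolding cis_conv_exp by simp
        also have "\<dots> = - \<i>" by (rule complex_eqI) (use cos_3over2_pi sin_3over2_pi in simp_all)
        finally have "exp (\<i> * complex_of_real (3/2*pi)) = - \<i>" .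
        then show "2 * \<i> * s = complex_of_real (cmod (2 * \<i> * s)) * exp (\<i> * complex_of_real (3/2*pi))"
          using s assms(1) by (simp add: norm_mult)
      qed
    next
      assume s: "s = \<i> * of_real R"
      show ?thesis unfolding arg_in_third_def
      proof (intro conjI exI)
        show "2 * \<i> * s \<noteq> 0" using s assms(1) by simp
        show "pi \<le> pi" "pi \<le> 3 * pi / 2" by auto
        have "exp (\<i> * complex_of_real pi) = cis pi"
          unfolding cis_conv_exp by simp
        also have "\<dots> = - 1" by (simp add: complex_eq_iff)
        finally have "exp (\<i> * complex_of_real pi) = - 1" .
        then show "2 * \<i> * s = complex_of_real (cmod (2 * \<i> * s)) * exp (\<i> * complex_of_real pi)"
          using s assms(1) by (simp add: norm_mult)
      qed
    qed
    show "voiculescu_eq \<mu> (\<lambda>z. 2 * \<i> * s * cpow1 (1 / 2) z + (- (s^2)))"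
      using vo unfolding g_def by simp
  qed
  have nstrict: "\<not> strictly_freely_half_stable \<mu>"
  proof
    assume "strictly_freely_half_stable \<mu>"
    then obtain b where vb: "voiculescu_eq \<mu> (\<lambda>z. b * cpow1 (1/2) z)"
      unfolding strictly_freely_half_stable_def by blast
    obtain M where M: "M > 0" "\<forall>t>M. g (\<i> * of_real t) = b * cpow1 (1/2) (\<i> * of_real t)"
      using voic_unique[OF vo vb] inj unfolding F_def by blast
    define c where "c = cpow1 (1/2) (\<i> * of_real (M+1))"
    have c: "Re c > 0" "Im c > 0" "c^2 = \<i> * of_real (M+1)"
      using sq_props[of "\<i> * of_real (M+1)"] M(1) unfolding c_def by auto
    have "(2*c)^2 = \<i> * of_real (4*(M+1))" using c(3) by (simp add: power_mult_distrib)
    hence c2: "cpow1 (1/2) (\<i> * of_real (4*(M+1))) = 2*c"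
      using c sq_unique[of "2*c"] by (simp add: algebra_simps)
    have e1: "2 * \<i> * s * c - s ^ 2 = b*c" using M(2)[rule_format, of "M+1"] unfolding g_def c_def by simp
    have e2: "2 * \<i> * s * (2 * c) - s ^ 2 = b*(2*c)" using M(2)[rule_format, of "4*(M+1)"] M(1) c2 unfolding g_def by simp
    have "s^2 = (2 * \<i> * s * (2 * c) - s ^ 2) - 2*(2 * \<i> * s * c - s ^ 2)" by (simp add: algebra_simps)
    also have "\<dots> = b*(2*c) - 2*(b*c)" using e1 e2 by simp
    also have "\<dots> = 0" by simp
    finally have "s = 0" by simp
    then show False using assms(1,2) by auto
  qed
  show ?thesis using vo free nstrict unfolding g_def by blast
qed

end
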